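(* Let $F$ be a probability distribution on $[0,\infty)$ with finite mean $\mu>0$, and suppose its cumulative distribution function $F$ is differentiable in a neighborhood of $\mu$ with density $f=F'$ positive on that neighborhood. Then $p^*=\mu$ is the unique maximizer of $p\mapsto \mathsf{W}(p,F)$ over $p\in\mathbb{R}_+$.
   Context: Symmetric bilateral trade: $B,S$ i.i.d. with distribution $F$. Posting price $p$, trade occurs iff $B>p\ge S$. Welfare: $\mathsf{W}(p,F)=\mathbb{E}[S]+\mathbb{E}[(B-S)\mathbf 1_{B>p\ge S}]$. *)

theory Defs
  imports "HOL-Probability.Probability"
begin

text \<open>Welfare of posting price p in symmetric bilateral trade, where buyer value B
and seller value S are i.i.d. with law M (B is the first coordinate, S the second):
W(p,F) = E[S] + E[(B - S) 1{B > p >= S}].\<close>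

definition welfare :: "real measure \<Rightarrow> real \<Rightarrow> real" where
  "welfare M p =
     (\<integral>s. s \<partial>M) +
     (\<integral>bs. (fst bs - snd bs) * (if fst bs > p \<and> p \<ge> snd bs then 1 else 0) \<partial>(M \<Otimes>\<^sub>M M))"

end

theory Submission
  imports Defs
begin

lemma prod_integral_aux:
  fixes f g :: "real \<Rightarrow> real"
  assumes M: "prob_space M" and f: "integrable M f" and g: "integrable M g"
  shows "integrable (M \<Otimes>\<^sub>M M) (\<lambda>x. f (fst x) * g (snd x))"
    and "(\<integral>x. f (fst x) * g (snd x) \<partial>(M \<Otimes>\<^sub>M M)) = integral\<^sup>L M f * integral\<^sup>L M g"
proof -
  interpret prob_space M by (rule M)
  interpret P: pair_sigma_finite M M
    by (simp add: pair_sigma_finite_def sigma_finite_measure_axioms)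
  have [measurable]: "f \<in> borel_measurable M" "g \<in> borel_measurable M" using f g by auto
  show I: "integrable (M \<Otimes>\<^sub>M M) (\<lambda>x. f (fst x) * g (snd x))"
  proof (rule P.Fubini_integrable)
    show "(\<lambda>x. f (fst x) * g (snd x)) \<in> borel_measurable (M \<Otimes>\<^sub>M M)" by measurable
    have "integrable M (\<lambda>x. norm (f x) * (\<integral>y. norm (g y) \<partial>M))"
      using f by (intro integrable_mult_left integrable_norm)
    then show "integrable M (\<lambda>x. \<integral>y. norm (f (fst (x, y)) * g (snd (x, y))) \<partial>M)"
      by (simp add: abs_mult)
    show "AE x in M. integrable M (\<lambda>y. f (fst (x, y)) * g (snd (x, y)))"
      using g by (auto intro!: integrable_mult_right)
  qed
  have "(\<integral>x. f (fst x) * g (snd x) \<partial>(M \<Otimes>\<^sub>M M)) = (\<integral>x. \<integral>y. f x * g y \<partial>M \<partial>M)"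
    using P.integral_fst'[OF I] by simp
  also have "\<dots> = (\<integral>x. f x * integral\<^sup>L M g \<partial>M)" by simp
  also have "\<dots> = integral\<^sup>L M f * integral\<^sup>L M g" by simp
  finally show "(\<integral>x. f (fst x) * g (snd x) \<partial>(M \<Otimes>\<^sub>M M)) = integral\<^sup>L M f * integral\<^sup>L M g" .
qed

lemma welfare_formula:
  assumes M: "prob_space M" and sM: "sets M = sets borel"
    and ix: "integrable M (\<lambda>x. x)" and mu: "\<mu> = (\<integral>x. x \<partial>M)"
  shows "welfare M p = \<mu> + (\<integral>x. (x - \<mu>) * indicator {p<..} x \<partial>M)"
proof -
  interpret prob_space M by (rule M)
  have [measurable_cong]: "sets M = sets borel" by (rule sM)
  let ?A = "{p<..} :: real set" and ?B = "{..p} :: real set"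
  have iA: "integrable M (\<lambda>x. x * indicator ?A x)"
    using ix by (intro integrable_real_mult_indicator) (auto simp: sM)
  have iB: "integrable M (\<lambda>x. x * indicator ?B x)"
    using ix by (intro integrable_real_mult_indicator) (auto simp: sM)
  have jA: "integrable M (indicator ?A :: real \<Rightarrow> real)"
    by (intro integrable_indicator_iff[THEN iffD2]) (auto simp: sM emeasure_finite less_top[symmetric])
  have jB: "integrable M (indicator ?B :: real \<Rightarrow> real)"
    by (intro integrable_indicator_iff[THEN iffD2]) (auto simp: sM emeasure_finite less_top[symmetric])
  have eq: "(\<lambda>bs::real\<times>real. (fst bs - snd bs) * (if fst bs > p \<and> p \<ge> snd bs then 1 else 0)) =
     (\<lambda>bs. (fst bs * indicator ?A (fst bs)) * indicator ?B (snd bs)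
          - indicator ?A (fst bs) * (snd bs * indicator ?B (snd bs)))"
    by (auto simp: indicator_def fun_eq_iff)
  have "(\<integral>bs. (fst bs - snd bs) * (if fst bs > p \<and> p \<ge> snd bs then 1 else 0) \<partial>(M \<Otimes>\<^sub>M M))
     = (\<integral>x. x * indicator ?A x \<partial>M) * (\<integral>x. indicator ?B x \<partial>M)
       - (\<integral>x. indicator ?A x \<partial>M) * (\<integral>x. x * indicator ?B x \<partial>M)" (is "?W = _")
  proof -
    note p1 = prod_integral_aux[OF M iA jB] and p2 = prod_integral_aux[OF M jA iB]
    have "(\<integral>bs. (fst bs * indicator ?A (fst bs)) * indicator ?B (snd bs)
          - indicator ?A (fst bs) * (snd bs * indicator ?B (snd bs)) \<partial>(M \<Otimes>\<^sub>M M))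
      = (\<integral>bs. (fst bs * indicator ?A (fst bs)) * indicator ?B (snd bs) \<partial>(M \<Otimes>\<^sub>M M))
       - (\<integral>bs. indicator ?A (fst bs) * (snd bs * indicator ?B (snd bs)) \<partial>(M \<Otimes>\<^sub>M M))"
      using p1(1) p2(1) by (rule Bochner_Integration.integral_diff)
    then show ?thesis unfolding eq using p1(2) p2(2) by simp
  qed
  moreover have "(\<integral>x. indicator ?B x \<partial>M) = 1 - (\<integral>x. indicator ?A x \<partial>M :: real)"
  proof -
    have "(\<integral>x. indicator ?B x + indicator ?A x \<partial>M) = (\<integral>x. (1::real) \<partial>M)"
      by (intro Bochner_Integration.integral_cong) (auto simp: indicator_def)
    then show ?thesis using jA jB by (simp add: prob_space)
  qed
  moreover have "(\<integral>x. x * indicator ?B x \<partial>M) = \<mu> - (\<integral>x. x * indicator ?A x \<partial>M)"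
  proof -
    have "(\<integral>x. x * indicator ?B x + x * indicator ?A x \<partial>M) = (\<integral>x. x \<partial>M)"
      by (intro Bochner_Integration.integral_cong) (auto simp: indicator_def)
    then show ?thesis using iA iB mu by simp
  qed
  moreover have "(\<integral>x. (x - \<mu>) * indicator {p<..} x \<partial>M)
      = (\<integral>x. x * indicator ?A x \<partial>M) - \<mu> * (\<integral>x. indicator ?A x \<partial>M)"
  proof -
    have "(\<integral>x. (x - \<mu>) * indicator {p<..} x \<partial>M) = (\<integral>x. x * indicator ?A x - \<mu> * indicator ?A x \<partial>M)"
      by (intro Bochner_Integration.integral_cong) (auto simp: algebra_simps)
    then show ?thesis using iA jA by simp
  qed
  ultimately have "?W = (\<integral>x. (x - \<mu>) * indicator {p<..} x \<partial>M)"
    by (simp only:) (simp add: algebra_simps)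
  then show ?thesis unfolding welfare_def mu[symmetric] by simp
qed

theorem corollary5:
  fixes M :: "real measure" and \<mu> :: real
  assumes "prob_space M"
    and "sets M = sets borel"
    and "AE x in M. x \<ge> 0"
    and "integrable M (\<lambda>x. x)"
    and "\<mu> = (\<integral>x. x \<partial>M)"
    and "\<mu> > 0"
    and "\<exists>\<delta>>0. \<exists>f. \<forall>x. \<bar>x - \<mu>\<bar> < \<delta> \<longrightarrow>
            (cdf M has_real_derivative f x) (at x) \<and> f x > 0"
  shows "\<forall>p\<ge>0. p \<noteq> \<mu> \<longrightarrow> welfare M p < welfare M \<mu>"
proof (intro allI impI)
  fix p :: real assume "p \<ge> 0" "p \<noteq> \<mu>"
  note M = assms(1) and sM = assms(2) and ix = assms(4) and mu = assms(5)
  interpret prob_space M by (rule M)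
  have spM: "space M = UNIV" using sets_eq_imp_space_eq[OF sM] by simp
  obtain \<delta> f where d: "\<delta> > 0" and df: "\<And>x. \<bar>x - \<mu>\<bar> < \<delta> \<Longrightarrow>
      (cdf M has_real_derivative f x) (at x) \<and> f x > 0" using assms(7) by blast
  have incr: "cdf M a < cdf M b" if "\<mu> - \<delta> < a" "a < b" "b < \<mu> + \<delta>" for a b
  proof (rule DERIV_pos_imp_increasing[OF that(2)])
    fix x assume "a \<le> x" "x \<le> b"
    then have "\<bar>x - \<mu>\<bar> < \<delta>" using that by auto
    then show "\<exists>y. (cdf M has_real_derivative y) (at x) \<and> y > 0" using df by blast
  qed
  have meas: "measure M {a<..b} = cdf M b - cdf M a" if "a \<le> b" for a b
  proof -
    have "{a<..b} = {..b} - {..a}" using that by auto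
    then show ?thesis unfolding cdf_def
      by (simp add: measure_Diff sM emeasure_finite that)
  qed
  have intg: "integrable M (\<lambda>x. (x - \<mu>) * indicator A x)" if "A \<in> sets borel" for A
    using that ix by (intro integrable_real_mult_indicator) (auto simp: sM)
  have intc: "integrable M (\<lambda>x. c * indicator A x :: real)" if "A \<in> sets borel" for A c
    using that by (intro integrable_mult_right integrable_indicator_iff[THEN iffD2])
       (auto simp: sM emeasure_finite less_top[symmetric])
  have W: "welfare M \<mu> - welfare M p = (\<integral>x. (x - \<mu>) * (indicator {\<mu><..} x - indicator {p<..} x) \<partial>M)"
    using welfare_formula[OF M sM ix mu, of \<mu>] welfare_formula[OF M sM ix mu, of p]
      Bochner_Integration.integral_diff[OF intg[of "{\<mu><..}"] intg[of "{p<..}"]]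
    by (simp add: algebra_simps)
  show "welfare M p < welfare M \<mu>"
  proof (cases "p < \<mu>")
    case True
    define q where "q = max p (\<mu> - \<delta>/2)"
    define r where "r = (q + \<mu>) / 2"
    have q: "p \<le> q" "q < \<mu>" "\<mu> - \<delta> < q" using True d by (auto simp: q_def)
    have r: "q < r" "r < \<mu>" using q by (auto simp: r_def)
    have "0 < (\<mu> - r) * measure M {q<..r}"
      using meas[of q r] incr[of q r] q r d by (intro mult_pos_pos) auto
    also have "\<dots> = (\<integral>x. (\<mu> - r) * indicator {q<..r} x \<partial>M)"
      by (simp add: spM)
    also have "\<dots> \<le> (\<integral>x. (x - \<mu>) * (indicator {\<mu><..} x - indicator {p<..} x) \<partial>M)"
    proof (rule integral_mono)
      show "integrable M (\<lambda>x. (\<mu> - r) * indicator {q<..r} x)" by (rule intc) auto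
      show "integrable M (\<lambda>x. (x - \<mu>) * (indicator {\<mu><..} x - indicator {p<..} x))"
        using Bochner_Integration.integrable_diff[OF intg[of "{\<mu><..}"] intg[of "{p<..}"]]
        by (simp add: algebra_simps)
      fix x show "(\<mu> - r) * indicator {q<..r} x \<le> (x - \<mu>) * (indicator {\<mu><..} x - indicator {p<..} x)"
        using q r by (auto simp: indicator_def)
    qed
    finally show ?thesis using W by simp
  next
    case False
    then have pm: "\<mu> < p" using \<open>p \<noteq> \<mu>\<close> by simp
    define q where "q = min p (\<mu> + \<delta>/2)"
    define r where "r = (q + \<mu>) / 2"
    have q: "q \<le> p" "\<mu> < q" "q < \<mu> + \<delta>" using pm d by (auto simp: q_def)
    have r: "r < q" "\<mu> < r" using q by (auto simp: r_def)
    have "0 < (r - \<mu>) * measure M {r<..q}"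
      using meas[of r q] incr[of r q] q r d by (intro mult_pos_pos) auto
    also have "\<dots> = (\<integral>x. (r - \<mu>) * indicator {r<..q} x \<partial>M)"
      by (simp add: spM)
    also have "\<dots> \<le> (\<integral>x. (x - \<mu>) * (indicator {\<mu><..} x - indicator {p<..} x) \<partial>M)"
    proof (rule integral_mono)
      show "integrable M (\<lambda>x. (r - \<mu>) * indicator {r<..q} x)" by (rule intc) auto
      show "integrable M (\<lambda>x. (x - \<mu>) * (indicator {\<mu><..} x - indicator {p<..} x))"
        using Bochner_Integration.integrable_diff[OF intg[of "{\<mu><..}"] intg[of "{p<..}"]]
        by (simp add: algebra_simps)
      fix x show "(r - \<mu>) * indicator {r<..q} x \<le> (x - \<mu>) * (indicator {\<mu><..} x - indicator {p<..} x)"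
        using q r by (auto simp: indicator_def)
    qed
    finally show ?thesis using W by simp
  qed
qed

end
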